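(* Let $p=2$. For every $\boldsymbol\lambda\in\mathbb Q^2$, \[ \mathbb{G}_{\boldsymbol{\lambda}}(\tau)= \sum_{\mathbf n\in\mathbb N_0^2} q^{2Q\left(\mathbf{n}+\boldsymbol{\lambda}+\left(\frac12,\frac12\right)\right)} -\sum_{n_2>n_1\geq 0} q^{2Q\left(\mathbf{n}+\boldsymbol{\lambda}+\left(\frac12,\, 0\right)\right)} -\sum_{n_1>n_2\geq 0} q^{2Q\left(\mathbf{n}+\boldsymbol{\lambda}+\left(0,\frac12\right)\right)}. \]
   Context: $q:=e^{2\pi i\tau}$, $\tau\in\mathbb H$. $Q(\mathbf n):=n_1^2+n_2^2-n_1n_2$; $\mathbb N=\{1,2,\dots\}$, $\mathbb N_0=\{0,1,2,\dots\}$; the sums over $n_2>n_1\ge0$ etc. are over integer pairs $\mathbf n=(n_1,n_2)$. With $p=2$, for $\boldsymbol{\lambda}\in\mathbb Q^2$, \begin{multline*} \mathbb{G}_{\boldsymbol{\lambda}}(\tau):=\sum_{\mathbf{n} \in \mathbb N^2} {\rm min}(n_1,n_2)\,q^{2 Q\left(\mathbf n+\boldsymbol{\lambda}- \left(\frac12, \frac12\right)\right)} \Big(1-q^{2\left(n_1+\lambda_1\right)-\left(n_2+\lambda_2\right)}-q^{2\left(n_2+\lambda_2\right)-\left(n_1+\lambda_1\right)}\\+q^{3\left(n_1+\lambda_1\right)}+q^{3\left(n_2+\lambda_2\right)}-q^{2\left(n_1+\lambda_1\right)+2\left(n_2+\lambda_2\right)}\Big). \end{multline*} *)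

theory Defs
  imports "HOL-Analysis.Analysis"
begin

text \<open>q^x := e^{2 pi i tau x} for real exponent x (q = e^{2 pi i tau}).\<close>
definition qpow :: "complex \<Rightarrow> real \<Rightarrow> complex" where
  "qpow \<tau> x = exp (2 * of_real pi * \<i> * \<tau> * of_real x)"

definition Qf :: "real \<Rightarrow> real \<Rightarrow> real" where
  "Qf x1 x2 = x1^2 + x2^2 - x1 * x2"

text \<open>The function G_lambda(tau) for p = 2, summed over n in N^2 (N = {1,2,...}).\<close>
definition GG :: "real \<Rightarrow> real \<Rightarrow> complex \<Rightarrow> complex" where
  "GG l1 l2 \<tau> = infsum (\<lambda>(n1, n2).
     of_nat (min n1 n2) * qpow \<tau> (2 * Qf (real n1 + l1 - 1/2) (real n2 + l2 - 1/2)) *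
     (1 - qpow \<tau> (2 * (real n1 + l1) - (real n2 + l2))
        - qpow \<tau> (2 * (real n2 + l2) - (real n1 + l1))
        + qpow \<tau> (3 * (real n1 + l1)) + qpow \<tau> (3 * (real n2 + l2))
        - qpow \<tau> (2 * (real n1 + l1) + 2 * (real n2 + l2))))
     ({1..} \<times> {1..} :: (nat \<times> nat) set)"

end

theory Submission imports Defs begin

abbreviation AA :: "complex \<Rightarrow> real \<Rightarrow> real \<Rightarrow> complex" where
  "AA \<tau> x y \<equiv> qpow \<tau> (2 * Qf x y)"

lemma norm_qpow: "norm (qpow \<tau> x) = exp (- 2 * pi * Im \<tau> * x)"
  unfolding qpow_def by (simp add: norm_exp_eq_Re)

lemma exp_prod_summable: "(\<lambda>(n1::nat, n2::nat). exp (- real n1) * exp (- real n2)) summable_on UNIV"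
proof -
  have g: "summable (\<lambda>n::nat. exp (- real n))"
  proof -
    have "norm (exp (-1::real)) < 1" by simp
    hence "summable (\<lambda>n::nat. (exp (-1::real)) ^ n)" by (rule summable_geometric)
    moreover have "(exp (-1)) ^ n = exp (- real n)" for n
      by (metis exp_of_nat_mult mult.commute mult_minus1_right)
    ultimately show ?thesis by simp
  qed
  then obtain S where S: "(\<lambda>n::nat. exp (- real n)) sums S" by (auto simp: summable_def)
  hence hs: "((\<lambda>n::nat. exp (- real n)) has_sum S) UNIV"
    by (intro sums_nonneg_imp_has_sum) auto
  have "(\<lambda>p::nat\<times>nat. exp (- real (fst p)) * exp (- real (snd p))) summable_on Sigma UNIV (\<lambda>_. UNIV)"
  proof (rule summable_on_SigmaI[where g = "\<lambda>x. exp (- real x) * S"])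
    show "((\<lambda>y. exp (- real (fst (x, y))) * exp (- real (snd (x, y)))) has_sum exp (- real x) * S) UNIV" for x
      using has_sum_cmult_right[OF hs, of "exp (- real x)"] by simp
    show "(\<lambda>x. exp (- real x) * S) summable_on UNIV"
      using g by (intro summable_on_cmult_left summable_nonneg_imp_summable_on) auto
  qed auto
  thus ?thesis by (simp add: case_prod_beta')
qed

lemma core_summable:
  fixes c s t :: real
  assumes c: "c > 0"
  shows "(\<lambda>(n1::nat, n2::nat). (real n1 + real n2 + 1) * exp (- c * Qf (real n1 + s) (real n2 + t))) summable_on UNIV"
proof -
  define K where "K = exp (2 * \<bar>s\<bar> + 2 * \<bar>t\<bar> + 4 / c)"
  have bnd: "(real n1 + real n2 + 1) * exp (- c * Qf (real n1 + s) (real n2 + t))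
        \<le> K * (exp (- real n1) * exp (- real n2))" for n1 n2 :: nat
  proof -
    define x where "x = real n1 + s"
    define y where "y = real n2 + t"
    have Q0: "Qf x y - (x^2 + y^2) / 2 = (x - y)^2 / 2"
      unfolding Qf_def by (simp add: power2_eq_square field_simps)
    have Q: "Qf x y \<ge> (x^2 + y^2) / 2"
      using Q0 zero_le_power2[of "x - y"] by linarith
    have hx: "c / 2 * x^2 \<ge> 2 * x - 2 / c"
    proof -
      have "0 \<le> c / 2 * (x - 2 / c)^2" using c by simp
      also have "c / 2 * (x - 2 / c)^2 = c / 2 * x^2 - 2 * x + 2 / c"
        using c by (simp add: power2_eq_square field_simps)
      finally show ?thesis by simp
    qed
    have hy: "c / 2 * y^2 \<ge> 2 * y - 2 / c"
    proof -
      have "0 \<le> c / 2 * (y - 2 / c)^2" using c by simp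
      also have "c / 2 * (y - 2 / c)^2 = c / 2 * y^2 - 2 * y + 2 / c"
        using c by (simp add: power2_eq_square field_simps)
      finally show ?thesis by simp
    qed
    have "c * Qf x y \<ge> c * ((x^2 + y^2) / 2)" using Q c by simp
    hence cQ: "c * Qf x y \<ge> 2 * real n1 + 2 * real n2 - (2 * \<bar>s\<bar> + 2 * \<bar>t\<bar> + 4 / c)"
      using hx hy unfolding x_def y_def by (simp add: algebra_simps)
    have e1: "exp (- c * Qf x y) \<le> K * exp (- 2 * (real n1 + real n2))"
    proof -
      have "K * exp (- 2 * (real n1 + real n2)) = exp ((2 * \<bar>s\<bar> + 2 * \<bar>t\<bar> + 4 / c) - 2 * (real n1 + real n2))"
        unfolding K_def by (simp add: exp_diff exp_minus exp_add field_simps)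
      also have "exp (- c * Qf x y) \<le> \<dots>" using cQ by simp
      finally show ?thesis by simp
    qed
    have e2: "real n1 + real n2 + 1 \<le> exp (real n1 + real n2)"
      using exp_ge_add_one_self[of "real n1 + real n2"] by linarith
    have "(real n1 + real n2 + 1) * exp (- c * Qf x y) \<le> exp (real n1 + real n2) * (K * exp (- 2 * (real n1 + real n2)))"
      by (rule mult_mono[OF e2 e1]) auto
    also have "\<dots> = K * exp ((real n1 + real n2) + (- 2 * (real n1 + real n2)))"
      by (simp only: exp_add) (simp add: algebra_simps)
    also have "\<dots> = K * (exp (- real n1) * exp (- real n2))"
      by (simp add: exp_add[symmetric] algebra_simps)
    finally show ?thesis unfolding x_def y_def .
  qed
  have "(\<lambda>(n1::nat, n2::nat). K * (exp (- real n1) * exp (- real n2))) summable_on UNIV"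
    using summable_on_cmult_right[OF exp_prod_summable, of K] by (simp add: case_prod_beta')
  thus ?thesis
    by (rule summable_on_comparison_test) (use bnd in auto)
qed

lemma weighted_summable:
  fixes f :: "nat \<times> nat \<Rightarrow> complex"
  assumes tau: "Im \<tau> > 0"
  assumes b: "\<And>n1 n2. norm (f (n1, n2)) \<le> (real n1 + real n2 + 1) * exp (- (4 * pi * Im \<tau>) * Qf (real n1 + s) (real n2 + t))"
  shows "f summable_on UNIV"
proof -
  have c: "4 * pi * Im \<tau> > 0" using tau by simp
  have "(\<lambda>x. norm (f x)) summable_on UNIV"
    by (rule Infinite_Sum.abs_summable_on_comparison_test'[OF core_summable[OF c, of s t]]) (use b in auto)
  thus ?thesis using summable_on_iff_abs_summable_on_complex by blast
qed

lemma summable_on_diff':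
  fixes f g :: "'a \<Rightarrow> complex"
  assumes "f summable_on A" "g summable_on A"
  shows "(\<lambda>x. f x - g x) summable_on A"
  using summable_on_add[OF assms(1), of "\<lambda>x. - g x"] assms(2) summable_on_uminus[of g A] by simp

lemma infsum_diff':
  fixes f g :: "'a \<Rightarrow> complex"
  assumes "f summable_on A" "g summable_on A"
  shows "infsum (\<lambda>x. f x - g x) A = infsum f A - infsum g A"
  using infsum_add[OF assms(1), of "\<lambda>x. - g x"] assms(2) summable_on_uminus[of g A] infsum_uminus[of g A] by simp

lemma qpow_mult: "qpow \<tau> a * qpow \<tau> b = qpow \<tau> (a + b)"
  unfolding qpow_def by (simp add: exp_add[symmetric] algebra_simps)

lemma qpow_cong: "a = b \<Longrightarrow> qpow \<tau> a = qpow \<tau> b" by simp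

lemma shiftA:
  fixes x y :: real
  shows "AA \<tau> (x - 1/2) (y - 1/2) * qpow \<tau> (2 * x - y) = AA \<tau> x (y - 1/2)"
    and "AA \<tau> (x - 1/2) (y - 1/2) * qpow \<tau> (2 * y - x) = AA \<tau> (x - 1/2) y"
    and "AA \<tau> (x - 1/2) (y - 1/2) * qpow \<tau> (3 * x) = AA \<tau> (x + 1/2) y"
    and "AA \<tau> (x - 1/2) (y - 1/2) * qpow \<tau> (3 * y) = AA \<tau> x (y + 1/2)"
    and "AA \<tau> (x - 1/2) (y - 1/2) * qpow \<tau> (2 * x + 2 * y) = AA \<tau> (x + 1/2) (y + 1/2)"
  by (simp_all only: qpow_mult, (rule qpow_cong, simp add: Qf_def power2_eq_square algebra_simps)+)

lemma normAA: "norm (AA \<tau> x y) = exp (- (4 * pi * Im \<tau>) * Qf x y)"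
  by (simp add: norm_qpow)

theorem lemma3p5:
  fixes l1 l2 :: real and \<tau> :: complex
  assumes "l1 \<in> \<rat>" and "l2 \<in> \<rat>" and "Im \<tau> > 0"
  shows "GG l1 l2 \<tau> =
      infsum (\<lambda>(n1, n2). qpow \<tau> (2 * Qf (real n1 + l1 + 1/2) (real n2 + l2 + 1/2)))
        (UNIV :: (nat \<times> nat) set)
    - infsum (\<lambda>(n1, n2). qpow \<tau> (2 * Qf (real n1 + l1 + 1/2) (real n2 + l2)))
        {p :: nat \<times> nat. snd p > fst p}
    - infsum (\<lambda>(n1, n2). qpow \<tau> (2 * Qf (real n1 + l1) (real n2 + l2 + 1/2)))
        {p :: nat \<times> nat. fst p > snd p}"
proof -
  note tau = assms(3)
  define F1 where "F1 = (\<lambda>(n1::nat, n2::nat). (of_nat (min n1 n2) :: complex) * AA \<tau> (real n1 + l1 - 1/2) (real n2 + l2 - 1/2))"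
  define F2 where "F2 = (\<lambda>(n1::nat, n2::nat). (of_nat (min n1 n2) :: complex) * AA \<tau> (real n1 + l1) (real n2 + l2 - 1/2))"
  define F3 where "F3 = (\<lambda>(n1::nat, n2::nat). (of_nat (min n1 n2) :: complex) * AA \<tau> (real n1 + l1 - 1/2) (real n2 + l2))"
  define F4 where "F4 = (\<lambda>(n1::nat, n2::nat). (of_nat (min n1 n2) :: complex) * AA \<tau> (real n1 + l1 + 1/2) (real n2 + l2))"
  define F5 where "F5 = (\<lambda>(n1::nat, n2::nat). (of_nat (min n1 n2) :: complex) * AA \<tau> (real n1 + l1) (real n2 + l2 + 1/2))"
  define F6 where "F6 = (\<lambda>(n1::nat, n2::nat). (of_nat (min n1 n2) :: complex) * AA \<tau> (real n1 + l1 + 1/2) (real n2 + l2 + 1/2))"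
  define F1' where "F1' = (\<lambda>(n1::nat, n2::nat). (of_nat (min (Suc n1) (Suc n2)) :: complex) * AA \<tau> (real n1 + l1 + 1/2) (real n2 + l2 + 1/2))"
  define F2' where "F2' = (\<lambda>(n1::nat, n2::nat). (of_nat (min n1 (Suc n2)) :: complex) * AA \<tau> (real n1 + l1) (real n2 + l2 + 1/2))"
  define F3' where "F3' = (\<lambda>(n1::nat, n2::nat). (of_nat (min (Suc n1) n2) :: complex) * AA \<tau> (real n1 + l1 + 1/2) (real n2 + l2))"
  define R1 where "R1 = (\<lambda>(n1::nat, n2::nat). qpow \<tau> (2 * Qf (real n1 + l1 + 1/2) (real n2 + l2 + 1/2)))"
  define R2 where "R2 = (\<lambda>(n1::nat, n2::nat). qpow \<tau> (2 * Qf (real n1 + l1 + 1/2) (real n2 + l2)))"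
  define R3 where "R3 = (\<lambda>(n1::nat, n2::nat). qpow \<tau> (2 * Qf (real n1 + l1) (real n2 + l2 + 1/2)))"
  define c where "c = 4 * pi * Im \<tau>"
  have minle: "real (min a b) \<le> real a + real b + 1" for a b :: nat by simp
  have bound: "norm ((of_nat m :: complex) * AA \<tau> x y) \<le> (real n1 + real n2 + 1) * exp (- c * Qf (real n1 + s) (real n2 + t))"
    if "real m \<le> real n1 + real n2 + 1" "x = real n1 + s" "y = real n2 + t" for m n1 n2 x y s t
    using that unfolding c_def norm_mult normAA by (simp add: mult_right_mono)
  have sF1: "F1 summable_on UNIV"
    by (rule weighted_summable[OF tau, of _ "l1 - 1/2" "l2 - 1/2"]) (unfold F1_def case_prod_conv, rule bound[unfolded c_def], auto)
  have sF2: "F2 summable_on UNIV"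
    by (rule weighted_summable[OF tau, of _ "l1" "l2 - 1/2"]) (unfold F2_def case_prod_conv, rule bound[unfolded c_def], auto)
  have sF3: "F3 summable_on UNIV"
    by (rule weighted_summable[OF tau, of _ "l1 - 1/2" "l2"]) (unfold F3_def case_prod_conv, rule bound[unfolded c_def], auto)
  have sF4: "F4 summable_on UNIV"
    by (rule weighted_summable[OF tau, of _ "l1 + 1/2" "l2"]) (unfold F4_def case_prod_conv, rule bound[unfolded c_def], auto)
  have sF5: "F5 summable_on UNIV"
    by (rule weighted_summable[OF tau, of _ "l1" "l2 + 1/2"]) (unfold F5_def case_prod_conv, rule bound[unfolded c_def], auto)
  have sF6: "F6 summable_on UNIV"
    by (rule weighted_summable[OF tau, of _ "l1 + 1/2" "l2 + 1/2"]) (unfold F6_def case_prod_conv, rule bound[unfolded c_def], auto)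
  have sF1': "F1' summable_on UNIV"
    by (rule weighted_summable[OF tau, of _ "l1 + 1/2" "l2 + 1/2"]) (unfold F1'_def case_prod_conv, rule bound[unfolded c_def], auto)
  have sF2': "F2' summable_on UNIV"
    by (rule weighted_summable[OF tau, of _ "l1" "l2 + 1/2"]) (unfold F2'_def case_prod_conv, rule bound[unfolded c_def], auto)
  have sF3': "F3' summable_on UNIV"
    by (rule weighted_summable[OF tau, of _ "l1 + 1/2" "l2"]) (unfold F3'_def case_prod_conv, rule bound[unfolded c_def], auto)

  have AAc: "(m::complex) * AA \<tau> a b = m * AA \<tau> a' b'" if "a = a'" "b = b'" for m a b a' b'
    using that by simp
  let ?h1 = "\<lambda>(a::nat, b::nat). (Suc a, Suc b)"
  let ?h2 = "\<lambda>(a::nat, b::nat). (a, Suc b)"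
  let ?h3 = "\<lambda>(a::nat, b::nat). (Suc a, b)"
  have nr1: "a = 0 \<or> b = 0" if "(a, b) \<notin> range ?h1" for a b
  proof (rule ccontr)
    assume "\<not> (a = 0 \<or> b = 0)"
    hence "(a, b) = ?h1 (a - 1, b - 1)" by simp
    thus False using that by blast
  qed
  have nr2: "b = 0" if "(a, b) \<notin> range ?h2" for a b
  proof (rule ccontr)
    assume "\<not> b = 0"
    hence "(a, b) = ?h2 (a, b - 1)" by simp
    thus False using that by blast
  qed
  have nr3: "a = 0" if "(a, b) \<notin> range ?h3" for a b
  proof (rule ccontr)
    assume "\<not> a = 0"
    hence "(a, b) = ?h3 (a - 1, b)" by simp
    thus False using that by blast
  qed
  have e1: "infsum F1 UNIV = infsum F1' UNIV"
  proof -
    have "infsum F1 UNIV = infsum F1 (range ?h1)"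
      by (rule infsum_cong_neutral) (auto simp: F1_def dest: nr1)
    also have "\<dots> = infsum (F1 \<circ> ?h1) UNIV" by (rule infsum_reindex) (auto simp: inj_def)
    also have "F1 \<circ> ?h1 = F1'"
      unfolding F1_def F1'_def by (auto simp: fun_eq_iff algebra_simps)
    finally show ?thesis .
  qed
  have e2: "infsum F2 UNIV = infsum F2' UNIV"
  proof -
    have "infsum F2 UNIV = infsum F2 (range ?h2)"
      by (rule infsum_cong_neutral) (auto simp: F2_def dest: nr2)
    also have "\<dots> = infsum (F2 \<circ> ?h2) UNIV" by (rule infsum_reindex) (auto simp: inj_def)
    also have "F2 \<circ> ?h2 = F2'"
      unfolding F2_def F2'_def by (auto simp: fun_eq_iff algebra_simps)
    finally show ?thesis .
  qed
  have e3: "infsum F3 UNIV = infsum F3' UNIV"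
  proof -
    have "infsum F3 UNIV = infsum F3 (range ?h3)"
      by (rule infsum_cong_neutral) (auto simp: F3_def dest: nr3)
    also have "\<dots> = infsum (F3 \<circ> ?h3) UNIV" by (rule infsum_reindex) (auto simp: inj_def)
    also have "F3 \<circ> ?h3 = F3'"
      unfolding F3_def F3'_def by (auto simp: fun_eq_iff algebra_simps)
    finally show ?thesis .
  qed
  have d1: "F1' n - F6 n = R1 n" for n
    by (cases n) (simp add: F1'_def F6_def R1_def algebra_simps)
  have d2: "F2' n - F5 n = (if snd n < fst n then R3 n else 0)" for n
  proof -
    obtain a b where n: "n = (a, b)" by (cases n)
    have "min a (Suc b) = min a b + (if b < a then 1 else 0)" by auto
    hence m: "(of_nat (min a (Suc b)) :: complex) = of_nat (min a b) + (if b < a then 1 else 0)" by simp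
    show ?thesis unfolding n F2'_def F5_def R3_def by (simp only: case_prod_conv m) (simp add: algebra_simps)
  qed
  have d3: "F3' n - F4 n = (if fst n < snd n then R2 n else 0)" for n
  proof -
    obtain a b where n: "n = (a, b)" by (cases n)
    have "min (Suc a) b = min a b + (if a < b then 1 else 0)" by auto
    hence m: "(of_nat (min (Suc a) b) :: complex) = of_nat (min a b) + (if a < b then 1 else 0)" by simp
    show ?thesis unfolding n F3'_def F4_def R2_def by (simp only: case_prod_conv m) (simp add: algebra_simps)
  qed
  have r1: "infsum (\<lambda>n. F1 n - F6 n) UNIV = infsum R1 UNIV"
    using infsum_diff'[OF sF1 sF6] infsum_diff'[OF sF1' sF6] e1 d1 by simp
  have r2: "infsum (\<lambda>n. F3 n - F4 n) UNIV = infsum R2 {p. snd p > fst p}"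
  proof -
    have "infsum (\<lambda>n. F3 n - F4 n) UNIV = infsum (\<lambda>n. F3' n - F4 n) UNIV"
      using infsum_diff'[OF sF3 sF4] infsum_diff'[OF sF3' sF4] e3 by simp
    also have "\<dots> = infsum R2 {p. snd p > fst p}"
      unfolding d3 by (rule infsum_cong_neutral) auto
    finally show ?thesis .
  qed
  have r3: "infsum (\<lambda>n. F2 n - F5 n) UNIV = infsum R3 {p. fst p > snd p}"
  proof -
    have "infsum (\<lambda>n. F2 n - F5 n) UNIV = infsum (\<lambda>n. F2' n - F5 n) UNIV"
      using infsum_diff'[OF sF2 sF5] infsum_diff'[OF sF2' sF5] e2 by simp
    also have "\<dots> = infsum R3 {p. fst p > snd p}"
      unfolding d2 by (rule infsum_cong_neutral) auto
    finally show ?thesis .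
  qed
  have distr: "(m::complex) * A * (1 - a - b + c + d - e) = m * A - m * (A * a) - m * (A * b) + m * (A * c) + m * (A * d) - m * (A * e)"
    for m A a b c d e by (simp add: algebra_simps)
  have "GG l1 l2 \<tau> = infsum (\<lambda>n. (F1 n - F6 n) - (F2 n - F5 n) - (F3 n - F4 n)) UNIV"
    unfolding GG_def
  proof (rule infsum_cong_neutral)
    fix x :: "nat \<times> nat" assume "x \<in> UNIV - {1..} \<times> {1..}"
    then obtain a b where "x = (a, b)" "a = 0 \<or> b = 0" by (cases x) auto
    thus "F1 x - F6 x - (F2 x - F5 x) - (F3 x - F4 x) = 0"
      by (auto simp: F1_def F2_def F3_def F4_def F5_def F6_def)
  next
    fix x :: "nat \<times> nat"
    obtain a b where x: "x = (a, b)" by (cases x)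
    show "(case x of (n1, n2) \<Rightarrow>
     of_nat (min n1 n2) * qpow \<tau> (2 * Qf (real n1 + l1 - 1/2) (real n2 + l2 - 1/2)) *
     (1 - qpow \<tau> (2 * (real n1 + l1) - (real n2 + l2))
        - qpow \<tau> (2 * (real n2 + l2) - (real n1 + l1))
        + qpow \<tau> (3 * (real n1 + l1)) + qpow \<tau> (3 * (real n2 + l2))
        - qpow \<tau> (2 * (real n1 + l1) + 2 * (real n2 + l2)))) =
        F1 x - F6 x - (F2 x - F5 x) - (F3 x - F4 x)"
      unfolding x F1_def F2_def F3_def F4_def F5_def F6_def
      by (simp only: case_prod_conv distr shiftA) (simp add: algebra_simps)
  qed auto
  also have "\<dots> = infsum (\<lambda>n. F1 n - F6 n) UNIV - infsum (\<lambda>n. F2 n - F5 n) UNIV - infsum (\<lambda>n. F3 n - F4 n) UNIV"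
    using infsum_diff'[OF summable_on_diff'[OF summable_on_diff'[OF sF1 sF6] summable_on_diff'[OF sF2 sF5]] summable_on_diff'[OF sF3 sF4]]
      infsum_diff'[OF summable_on_diff'[OF sF1 sF6] summable_on_diff'[OF sF2 sF5]]
    by simp
  also have "\<dots> = infsum R1 UNIV - infsum R3 {p. fst p > snd p} - infsum R2 {p. snd p > fst p}"
    using r1 r2 r3 by simp
  finally show ?thesis unfolding R1_def R2_def R3_def by simp
qed

end
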